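(* Let $L\in\{0,1\}$, $X$, $T^{k-1}$ and $T_k$ be jointly distributed discrete random variables with finite supports such that, for every value $t^{k-1}$ of $T^{k-1}$ with positive probability, conditioned on $T^{k-1}=t^{k-1}$ and $L=0$ the message $T_k$ is independent of $X$. Assume $\Pr(L=0\mid X=x,T^{k-1}=t^{k-1})>0$ whenever $\Pr(X=x,T^{k-1}=t^{k-1})>0$. Writing $T^k=(T^{k-1},T_k)$, \[ I(X;T_k\mid T^{k-1})\le \mathrm{susp}(X,T^k)-\mathrm{susp}(X,T^{k-1}). \]
   Context: All logarithms are base $2$. For a random variable $Y$ (possibly a tuple of random variables) jointly distributed with $L\in\{0,1\}$ and a value $y$ with $\Pr(Y=y)>0$, the suspicion given $Y=y$ is $\mathrm{susp}(Y=y)=-\log\Pr(L=0\mid Y=y)\in[0,\infty]$, and the suspicion given $Y$ is $\mathrm{susp}(Y)=\sum_{y}\Pr(Y=y)\,\mathrm{susp}(Y=y)$. Here $T^{k-1}$ plays the role of a previous transcript and $T_k$ of the next message, sent by a player whose leaking indicator is $L$. $I(X;T_k\mid T^{k-1})$ is conditional mutual information. *)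

theory Defs
  imports "HOL-Probability.Probability"
begin

text \<open>Discrete random variables are functions on the sample space of a pmf M.\<close>

definition prb :: "'w pmf \<Rightarrow> ('w \<Rightarrow> bool) \<Rightarrow> real" where
  "prb M P = measure_pmf.prob M {w. P w}"

text \<open>Conditional probability Pr(P | Q) (= 0 if Pr(Q) = 0, never used in that case).\<close>
definition cprb :: "'w pmf \<Rightarrow> ('w \<Rightarrow> bool) \<Rightarrow> ('w \<Rightarrow> bool) \<Rightarrow> real" where
  "cprb M P Q = prb M (\<lambda>w. P w \<and> Q w) / prb M Q"

definition susp_at :: "'w pmf \<Rightarrow> ('w \<Rightarrow> nat) \<Rightarrow> ('w \<Rightarrow> 'y) \<Rightarrow> 'y \<Rightarrow> ereal" where
  "susp_at M L Y y =
     (let q = cprb M (\<lambda>w. L w = 0) (\<lambda>w. Y w = y)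
      in if q = 0 then \<infinity> else ereal (- log 2 q))"

definition susp :: "'w pmf \<Rightarrow> ('w \<Rightarrow> nat) \<Rightarrow> ('w \<Rightarrow> 'y) \<Rightarrow> ereal" where
  "susp M L Y = (\<Sum>y \<in> Y ` set_pmf M. ereal (prb M (\<lambda>w. Y w = y)) * susp_at M L Y y)"

definition cond_mi :: "'w pmf \<Rightarrow> ('w \<Rightarrow> 'a) \<Rightarrow> ('w \<Rightarrow> 'b) \<Rightarrow> ('w \<Rightarrow> 'c) \<Rightarrow> real" where
  "cond_mi M X Y Z =
     (\<Sum>(x, y, z) \<in> (\<lambda>w. (X w, Y w, Z w)) ` set_pmf M.
        prb M (\<lambda>w. X w = x \<and> Y w = y \<and> Z w = z) *
        log 2 ((prb M (\<lambda>w. X w = x \<and> Y w = y \<and> Z w = z) * prb M (\<lambda>w. Z w = z)) /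
               (prb M (\<lambda>w. X w = x \<and> Z w = z) * prb M (\<lambda>w. Y w = y \<and> Z w = z))))"

end

theory Submission
  imports Defs
begin

lemma prb_cong: "(\<And>w. P w = Q w) \<Longrightarrow> prb M P = prb M Q"
  by (simp add: prb_def)

lemma prb_pos: "w \<in> set_pmf M \<Longrightarrow> P w \<Longrightarrow> prb M P > 0"
  unfolding prb_def by (rule measure_pmf_posI) auto

lemma prb_mono: "(\<And>w. P w \<Longrightarrow> Q w) \<Longrightarrow> prb M P \<le> prb M Q"
  unfolding prb_def by (rule measure_pmf.finite_measure_mono) auto

lemma prb_nonneg: "prb M P \<ge> 0" unfolding prb_def by simp
lemma prb_le1: "prb M P \<le> 1" unfolding prb_def by simp

lemma integrable_fin:
  assumes "finite (Y ` set_pmf M)"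
  shows "integrable (measure_pmf M) (\<lambda>w. g (Y w) :: real)"
proof (rule measure_pmf.integrable_const_bound[where B="\<Sum>y\<in>Y ` set_pmf M. \<bar>g y\<bar>"])
  show "AE x in measure_pmf M. norm (g (Y x)) \<le> (\<Sum>y\<in>Y ` set_pmf M. \<bar>g y\<bar>)"
  proof (rule AE_pmfI)
    fix w assume "w \<in> set_pmf M"
    then have "Y w \<in> Y ` set_pmf M" by simp
    from member_le_sum[where f="\<lambda>y. \<bar>g y\<bar>", OF this _ assms]
    show "norm (g (Y w)) \<le> (\<Sum>y\<in>Y ` set_pmf M. \<bar>g y\<bar>)" by simp
  qed
qed simp

lemma int_if: "(\<integral>w. (if P w then c else 0) \<partial>measure_pmf M) = c * prb M P"
proof -
  have "(\<lambda>w. (if P w then c else 0)) = (\<lambda>w. c * indicator {w. P w} w)"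
    by (auto simp: indicator_def)
  then show ?thesis by (simp add: prb_def)
qed

lemma decomp:
  assumes "finite (Y ` set_pmf M)" "integrable (measure_pmf M) f"
  shows "integral\<^sup>L (measure_pmf M) f
     = (\<Sum>y\<in>Y ` set_pmf M. \<integral>w. (if Y w = y then f w else 0 :: real) \<partial>measure_pmf M)"
proof -
  have "integral\<^sup>L (measure_pmf M) f
     = (\<integral>w. (\<Sum>y\<in>Y ` set_pmf M. (if Y w = y then f w else 0)) \<partial>measure_pmf M)"
  proof (rule integral_cong_AE)
    show "AE x in measure_pmf M. f x = (\<Sum>y\<in>Y ` set_pmf M. if Y x = y then f x else 0)"
      by (rule AE_pmfI) (simp add: assms(1) sum.delta)
  qed auto
  also have "\<dots> = (\<Sum>y\<in>Y ` set_pmf M. \<integral>w. (if Y w = y then f w else 0) \<partial>measure_pmf M)"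
  proof -
    have "integrable (measure_pmf M) (\<lambda>w. if Y w = y then f w else 0)" for y
    proof -
    have "(\<lambda>w. if Y w = y then f w else 0) = (\<lambda>w. indicator {w. Y w = y} w *\<^sub>R f w)"
      by (auto simp: indicator_def)
    then show "integrable (measure_pmf M) (\<lambda>w. if Y w = y then f w else 0)"
      using integrable_mult_indicator[of "{w. Y w = y}" "measure_pmf M" f] assms(2) by simp
    qed
    then show ?thesis using Bochner_Integration.integral_sum[where I="Y ` set_pmf M" and M="measure_pmf M" and f="\<lambda>y w. if Y w = y then f w else 0"] by simp
  qed
  finally show ?thesis .
qed

lemma expect_fin:
  assumes "finite (Y ` set_pmf M)"
  shows "(\<integral>w. g (Y w) \<partial>measure_pmf M) = (\<Sum>y\<in>Y ` set_pmf M. prb M (\<lambda>w. Y w = y) * g y)"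
proof -
  have "(\<integral>w. g (Y w) \<partial>measure_pmf M)
     = (\<Sum>y\<in>Y ` set_pmf M. \<integral>w. (if Y w = y then g (Y w) else 0) \<partial>measure_pmf M)"
    by (rule decomp[OF assms integrable_fin[OF assms]])
  also have "\<dots> = (\<Sum>y\<in>Y ` set_pmf M. \<integral>w. (if Y w = y then g y else 0) \<partial>measure_pmf M)"
    by (intro sum.cong refl arg_cong[where f="integral\<^sup>L _"]) auto
  also have "\<dots> = (\<Sum>y\<in>Y ` set_pmf M. prb M (\<lambda>w. Y w = y) * g y)"
    by (simp add: int_if mult.commute)
  finally show ?thesis .
qed

lemma tower:
  assumes fin: "finite (Y ` set_pmf M)"
  shows "(\<integral>w. cprb M A (\<lambda>v. Y v = Y w) * g (Y w) \<partial>measure_pmf M)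
       = (\<integral>w. (if A w then 1 else 0) * g (Y w) \<partial>measure_pmf M)"
proof -
  have "(\<integral>w. cprb M A (\<lambda>v. Y v = Y w) * g (Y w) \<partial>measure_pmf M)
     = (\<Sum>y\<in>Y ` set_pmf M. prb M (\<lambda>w. Y w = y) * (cprb M A (\<lambda>v. Y v = y) * g y))"
    by (rule expect_fin[OF fin, where g="\<lambda>y. cprb M A (\<lambda>v. Y v = y) * g y"])
  also have "\<dots> = (\<Sum>y\<in>Y ` set_pmf M. prb M (\<lambda>w. A w \<and> Y w = y) * g y)"
  proof (rule sum.cong[OF refl])
    fix y assume "y \<in> Y ` set_pmf M"
    then have "prb M (\<lambda>w. Y w = y) > 0" by (auto intro: prb_pos)
    then show "prb M (\<lambda>w. Y w = y) * (cprb M A (\<lambda>v. Y v = y) * g y) = prb M (\<lambda>w. A w \<and> Y w = y) * g y"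
      by (simp add: cprb_def)
  qed
  also have "\<dots> = (\<Sum>y\<in>Y ` set_pmf M. \<integral>w. (if Y w = y then (if A w then 1 else 0) * g (Y w) else 0) \<partial>measure_pmf M)"
  proof (rule sum.cong[OF refl])
    fix y
    have "(\<lambda>w. (if Y w = y then (if A w then 1 else 0) * g (Y w) else 0)) = (\<lambda>w. if A w \<and> Y w = y then g y else 0)"
      by auto
    then show "prb M (\<lambda>w. A w \<and> Y w = y) * g y = (\<integral>w. (if Y w = y then (if A w then 1 else 0) * g (Y w) else 0) \<partial>measure_pmf M)"
      by (simp add: int_if mult.commute)
  qed
  also have "\<dots> = (\<integral>w. (if A w then 1 else 0) * g (Y w) \<partial>measure_pmf M)"
  proof (rule decomp[symmetric, OF fin])
    have "finite ((\<lambda>w. (A w, Y w)) ` set_pmf M)"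
      by (rule finite_subset[of _ "UNIV \<times> Y ` set_pmf M"]) (auto simp: fin)
    from integrable_fin[OF this, where g="\<lambda>(b,y). (if b then 1 else 0) * g y"]
    show "integrable (measure_pmf M) (\<lambda>w. (if A w then 1 else 0) * g (Y w))" by simp
  qed
  finally show ?thesis .
qed

lemma cprb_nonneg: "cprb M P Q \<ge> 0"
  unfolding cprb_def by (simp add: prb_nonneg)

lemma cprb_le1: "cprb M P Q \<le> 1"
proof -
  have "prb M (\<lambda>w. P w \<and> Q w) \<le> prb M Q" by (rule prb_mono) auto
  then show ?thesis unfolding cprb_def
    using prb_nonneg[of M Q] by (cases "prb M Q = 0") (auto simp: divide_le_eq_1)
qed

lemma susp_at_nonneg: "susp_at M L Y y \<ge> 0"
proof -
  define q where "q = cprb M (\<lambda>w. L w = 0) (\<lambda>w. Y w = y)"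
  have "0 \<le> q" "q \<le> 1" unfolding q_def by (rule cprb_nonneg, rule cprb_le1)
  moreover have "q \<noteq> 0 \<Longrightarrow> log 2 q \<le> 0" using calculation by (simp add: log_le_zero_cancel_iff)
  ultimately show ?thesis unfolding susp_at_def q_def[symmetric] Let_def by auto
qed

lemma log2_le: "z > 0 \<Longrightarrow> log 2 z \<le> (z - 1) / ln 2"
  unfolding log_def by (intro divide_right_mono ln_le_minus_one) auto

theorem corollary3p2:
  fixes M :: "'w pmf"
    and L :: "'w \<Rightarrow> nat"
    and X :: "'w \<Rightarrow> 'x"
    and T :: "'w \<Rightarrow> 't"
    and Tk :: "'w \<Rightarrow> 'm"
  assumes L01: "\<forall>w \<in> set_pmf M. L w \<in> {0, 1}"
    and finX: "finite (X ` set_pmf M)"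
    and finT: "finite (T ` set_pmf M)"
    and finTk: "finite (Tk ` set_pmf M)"
    and indep: "\<forall>t. prb M (\<lambda>w. T w = t) > 0 \<longrightarrow>
        (\<forall>x m. cprb M (\<lambda>w. X w = x \<and> Tk w = m) (\<lambda>w. T w = t \<and> L w = 0) =
               cprb M (\<lambda>w. X w = x) (\<lambda>w. T w = t \<and> L w = 0) *
               cprb M (\<lambda>w. Tk w = m) (\<lambda>w. T w = t \<and> L w = 0))"
    and pos: "\<forall>x t. prb M (\<lambda>w. X w = x \<and> T w = t) > 0 \<longrightarrow>
        cprb M (\<lambda>w. L w = 0) (\<lambda>w. X w = x \<and> T w = t) > 0"
  shows "ereal (cond_mi M X Tk T)
           \<le> susp M L (\<lambda>w. (X w, (T w, Tk w))) - susp M L (\<lambda>w. (X w, T w))"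
proof -
  let ?Y3 = "\<lambda>w. (X w, (T w, Tk w))"
  let ?Y2 = "\<lambda>w. (X w, T w)"
  let ?Y3' = "\<lambda>w. (X w, Tk w, T w)"
  let ?YT = "\<lambda>w. (T w, Tk w)"
  define S3 where "S3 = ?Y3 ` set_pmf M"
  define S2 where "S2 = ?Y2 ` set_pmf M"
  have finS3: "finite S3" unfolding S3_def
    by (rule finite_subset[of _ "X ` set_pmf M \<times> T ` set_pmf M \<times> Tk ` set_pmf M"]) (auto simp: finX finT finTk)
  have finS2: "finite S2" unfolding S2_def
    by (rule finite_subset[of _ "X ` set_pmf M \<times> T ` set_pmf M"]) (auto simp: finX finT)
  have finS3': "finite (?Y3' ` set_pmf M)"
    by (rule finite_subset[of _ "X ` set_pmf M \<times> Tk ` set_pmf M \<times> T ` set_pmf M"]) (auto simp: finX finT finTk)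
  have finYT: "finite (?YT ` set_pmf M)"
    by (rule finite_subset[of _ "T ` set_pmf M \<times> Tk ` set_pmf M"]) (auto simp: finT finTk)
  define b where "b y = cprb M (\<lambda>w. L w = 0) (\<lambda>w. ?Y3 w = y)" for y
  define a where "a y = cprb M (\<lambda>w. L w = 0) (\<lambda>w. ?Y2 w = y)" for y
  define c where "c t = cprb M (\<lambda>w. L w = 0) (\<lambda>w. T w = t)" for t
  define c2 where "c2 y = cprb M (\<lambda>w. L w = 0) (\<lambda>w. ?YT w = y)" for y

  have apos: "a (?Y2 w) > 0" if "w \<in> set_pmf M" for w
  proof -
    have "prb M (\<lambda>v. X v = X w \<and> T v = T w) > 0" using that by (intro prb_pos) auto
    with pos have "cprb M (\<lambda>v. L v = 0) (\<lambda>v. X v = X w \<and> T v = T w) > 0" by blast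
    then show ?thesis by (simp add: a_def)
  qed
  have cpos: "c (T w) > 0" if "w \<in> set_pmf M" for w
  proof -
    have "a (?Y2 w) > 0" using apos that .
    then have "prb M (\<lambda>v. L v = 0 \<and> X v = X w \<and> T v = T w) > 0"
      unfolding a_def cprb_def using prb_nonneg[of M "\<lambda>v. (X v, T v) = (X w, T w)"]
      by (auto simp: zero_less_divide_iff)
    also have "\<dots> \<le> prb M (\<lambda>v. L v = 0 \<and> T v = T w)" by (rule prb_mono) auto
    finally have "prb M (\<lambda>v. L v = 0 \<and> T v = T w) > 0" .
    moreover have "prb M (\<lambda>v. T v = T w) > 0" using that by (intro prb_pos) auto
    ultimately show ?thesis by (simp add: c_def cprb_def)
  qed

  define R2 where "R2 = (\<Sum>y\<in>S2. prb M (\<lambda>w. ?Y2 w = y) * (- log 2 (a y)))"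
  have susp2: "susp M L ?Y2 = ereal R2"
  proof -
    have "susp M L ?Y2 = (\<Sum>y\<in>S2. ereal (prb M (\<lambda>w. ?Y2 w = y) * (- log 2 (a y))))"
      unfolding susp_def S2_def[symmetric]
    proof (rule sum.cong[OF refl])
      fix y assume "y \<in> S2"
      then obtain w where w: "w \<in> set_pmf M" "y = ?Y2 w" unfolding S2_def by auto
      have "a y > 0" using apos[OF w(1)] w(2) by simp
      then show "ereal (prb M (\<lambda>w. ?Y2 w = y)) * susp_at M L ?Y2 y
           = ereal (prb M (\<lambda>w. ?Y2 w = y) * (- log 2 (a y)))"
        unfolding susp_at_def a_def by simp
    qed
    then show ?thesis unfolding R2_def by simp
  qed
  show ?thesis
  proof (cases "\<exists>y\<in>S3. b y = 0")
    case True
    then obtain y0 where y0: "y0 \<in> S3" "b y0 = 0" by blast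
    then obtain w0 where w0: "w0 \<in> set_pmf M" "y0 = ?Y3 w0" unfolding S3_def by auto
    have p0: "prb M (\<lambda>w. ?Y3 w = y0) > 0" using w0 by (intro prb_pos) auto
    have inf0: "ereal (prb M (\<lambda>w. ?Y3 w = y0)) * susp_at M L ?Y3 y0 = \<infinity>"
      using p0 y0(2) unfolding susp_at_def b_def by simp
    have nn: "(\<Sum>y\<in>S3-{y0}. ereal (prb M (\<lambda>w. ?Y3 w = y)) * susp_at M L ?Y3 y) \<ge> 0"
      by (intro sum_nonneg) (simp add: ereal_zero_le_0_iff prb_nonneg susp_at_nonneg)
    have "susp M L ?Y3 = ereal (prb M (\<lambda>w. ?Y3 w = y0)) * susp_at M L ?Y3 y0
        + (\<Sum>y\<in>S3-{y0}. ereal (prb M (\<lambda>w. ?Y3 w = y)) * susp_at M L ?Y3 y)"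
      unfolding susp_def S3_def[symmetric] by (rule sum.remove[OF finS3 y0(1)])
    then have "susp M L ?Y3 = \<infinity> + (\<Sum>y\<in>S3-{y0}. ereal (prb M (\<lambda>w. ?Y3 w = y)) * susp_at M L ?Y3 y)"
      by (simp only: inf0)
    then have "susp M L ?Y3 = \<infinity>" using nn
      by (cases "(\<Sum>y\<in>S3-{y0}. ereal (prb M (\<lambda>w. ?Y3 w = y)) * susp_at M L ?Y3 y)") auto
    then show ?thesis using susp2 by simp
  next
    case False
    have bpos: "b (?Y3 w) > 0" if "w \<in> set_pmf M" for w
    proof -
      have "b (?Y3 w) \<ge> 0" unfolding b_def by (rule cprb_nonneg)
      moreover have "?Y3 w \<in> S3" using that unfolding S3_def by auto
      ultimately show ?thesis using False by force
    qed
    define R3 where "R3 = (\<Sum>y\<in>S3. prb M (\<lambda>w. ?Y3 w = y) * (- log 2 (b y)))"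
    have susp3: "susp M L ?Y3 = ereal R3"
    proof -
      have "susp M L ?Y3 = (\<Sum>y\<in>S3. ereal (prb M (\<lambda>w. ?Y3 w = y) * (- log 2 (b y))))"
        unfolding susp_def S3_def[symmetric]
      proof (rule sum.cong[OF refl])
        fix y assume "y \<in> S3"
        then obtain w where w: "w \<in> set_pmf M" "y = ?Y3 w" unfolding S3_def by auto
        have "b y > 0" using bpos[OF w(1)] w(2) by simp
        then show "ereal (prb M (\<lambda>w. ?Y3 w = y)) * susp_at M L ?Y3 y
             = ereal (prb M (\<lambda>w. ?Y3 w = y) * (- log 2 (b y)))"
          unfolding susp_at_def b_def by simp
      qed
      then show ?thesis unfolding R3_def by simp
    qed
    define Ifun where "Ifun = (\<lambda>(x, m, t).
        log 2 ((prb M (\<lambda>w. X w = x \<and> Tk w = m \<and> T w = t) * prb M (\<lambda>w. T w = t)) /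
               (prb M (\<lambda>w. X w = x \<and> T w = t) * prb M (\<lambda>w. Tk w = m \<and> T w = t))))"
    have cmi: "cond_mi M X Tk T = (\<integral>w. Ifun (?Y3' w) \<partial>measure_pmf M)"
      unfolding expect_fin[OF finS3'] cond_mi_def
      by (rule sum.cong[OF refl]) (auto simp: Ifun_def)
    have R3i: "R3 = (\<integral>w. - log 2 (b (?Y3 w)) \<partial>measure_pmf M)"
      unfolding R3_def S3_def by (rule expect_fin[OF finS3[unfolded S3_def], where g="\<lambda>y. - log 2 (b y)", symmetric])
    have R2i: "R2 = (\<integral>w. - log 2 (a (?Y2 w)) \<partial>measure_pmf M)"
      unfolding R2_def S2_def by (rule expect_fin[OF finS2[unfolded S2_def], where g="\<lambda>y. - log 2 (a y)", symmetric])
    define r where "r w = c2 (?YT w) * (1 / c (T w))" for w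
    have rint: "(\<integral>w. r w \<partial>measure_pmf M) = 1"
    proof -
      have e1: "(\<integral>w. r w \<partial>measure_pmf M) = (\<integral>w. (if L w = 0 then 1 else 0) * (1 / c (T w)) \<partial>measure_pmf M)"
        using tower[OF finYT, where A="\<lambda>w. L w = 0" and g="\<lambda>(t,m). 1 / c t"] by (simp add: r_def c2_def)
      have e2: "(\<integral>w. c (T w) * (1 / c (T w)) \<partial>measure_pmf M) = (\<integral>w. (if L w = 0 then 1 else 0) * (1 / c (T w)) \<partial>measure_pmf M)"
        using tower[OF finT, where A="\<lambda>w. L w = 0" and g="\<lambda>t. 1 / c t"] by (simp add: c_def)
      have e3: "(\<integral>w. c (T w) * (1 / c (T w)) \<partial>measure_pmf M) = (\<integral>w. 1 \<partial>measure_pmf M)"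
        by (rule integral_cong_AE) (auto intro!: AE_pmfI dest: cpos)
      show ?thesis using e1 e2 e3 by simp
    qed
    have point: "Ifun (?Y3' w) \<le> - log 2 (b (?Y3 w)) - - log 2 (a (?Y2 w)) + (r w - 1) / ln 2"
      if w: "w \<in> set_pmf M" for w
    proof -
      define x where "x = X w"
      define t where "t = T w"
      define m where "m = Tk w"
      define pxmt where "pxmt = prb M (\<lambda>v. X v = x \<and> Tk v = m \<and> T v = t)"
      define pt where "pt = prb M (\<lambda>v. T v = t)"
      define pxt where "pxt = prb M (\<lambda>v. X v = x \<and> T v = t)"
      define pmt where "pmt = prb M (\<lambda>v. Tk v = m \<and> T v = t)"
      define qxtm where "qxtm = prb M (\<lambda>v. L v = 0 \<and> X v = x \<and> T v = t \<and> Tk v = m)"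
      define qxt where "qxt = prb M (\<lambda>v. L v = 0 \<and> X v = x \<and> T v = t)"
      define qtm where "qtm = prb M (\<lambda>v. L v = 0 \<and> T v = t \<and> Tk v = m)"
      define qt where "qt = prb M (\<lambda>v. L v = 0 \<and> T v = t)"
      have Ieq: "Ifun (?Y3' w) = log 2 (pxmt * pt / (pxt * pmt))"
        by (simp add: Ifun_def pxmt_def pt_def pxt_def pmt_def x_def t_def m_def)
      have pb: "prb M (\<lambda>v. ?Y3 v = ?Y3 w) = pxmt" unfolding pxmt_def x_def t_def m_def
        by (rule prb_cong) auto
      have qb: "prb M (\<lambda>v. L v = 0 \<and> ?Y3 v = ?Y3 w) = qxtm" unfolding qxtm_def x_def t_def m_def
        by (rule prb_cong) auto
      have beq: "b (?Y3 w) = qxtm / pxmt" unfolding b_def cprb_def pb qb ..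
      have aeq: "a (?Y2 w) = qxt / pxt" unfolding a_def cprb_def qxt_def pxt_def x_def t_def
        by (intro arg_cong2[where f="(/)"] prb_cong) auto
      have c2eq: "c2 (?YT w) = qtm / pmt" unfolding c2_def cprb_def qtm_def pmt_def t_def m_def
        by (intro arg_cong2[where f="(/)"] prb_cong) auto
      have ceq: "c (T w) = qt / pt" unfolding c_def cprb_def qt_def pt_def t_def ..
      have ppos: "pxmt > 0" "pt > 0" "pxt > 0" "pmt > 0"
        unfolding pxmt_def pt_def pxt_def pmt_def x_def t_def m_def using w by (auto intro: prb_pos)
      have "b (?Y3 w) > 0" by (rule bpos[OF w])
      then have qxtm_pos: "qxtm > 0" using ppos prb_nonneg[of M] unfolding beq qxtm_def
        by (auto simp: zero_less_divide_iff)
      have "a (?Y2 w) > 0" by (rule apos[OF w])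
      then have qxt_pos: "qxt > 0" using ppos prb_nonneg[of M] unfolding aeq qxt_def
        by (auto simp: zero_less_divide_iff)
      have "qxtm \<le> qtm" unfolding qxtm_def qtm_def by (rule prb_mono) auto
      then have qtm_pos: "qtm > 0" using qxtm_pos by simp
      have "qxt \<le> qt" unfolding qxt_def qt_def by (rule prb_mono) auto
      then have qt_pos: "qt > 0" using qxt_pos by simp
      have ind: "cprb M (\<lambda>v. X v = x \<and> Tk v = m) (\<lambda>v. T v = t \<and> L v = 0) =
               cprb M (\<lambda>v. X v = x) (\<lambda>v. T v = t \<and> L v = 0) *
               cprb M (\<lambda>v. Tk v = m) (\<lambda>v. T v = t \<and> L v = 0)"
        using indep ppos(2) unfolding pt_def by blast
      have i1: "cprb M (\<lambda>v. X v = x \<and> Tk v = m) (\<lambda>v. T v = t \<and> L v = 0) = qxtm / qt"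
        unfolding cprb_def qxtm_def qt_def by (intro arg_cong2[where f="(/)"] prb_cong) auto
      have i2: "cprb M (\<lambda>v. X v = x) (\<lambda>v. T v = t \<and> L v = 0) = qxt / qt"
        unfolding cprb_def qxt_def qt_def by (intro arg_cong2[where f="(/)"] prb_cong) auto
      have i3: "cprb M (\<lambda>v. Tk v = m) (\<lambda>v. T v = t \<and> L v = 0) = qtm / qt"
        unfolding cprb_def qtm_def qt_def by (intro arg_cong2[where f="(/)"] prb_cong) auto
      have key: "qxtm * qt = qxt * qtm"
        using ind qt_pos unfolding i1 i2 i3 by (simp add: field_simps power2_eq_square)
      have "Ifun (?Y3' w) - - log 2 (b (?Y3 w)) + - log 2 (a (?Y2 w))
          = log 2 (pxmt * pt / (pxt * pmt)) + log 2 (qxtm / pxmt) - log 2 (qxt / pxt)"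
        unfolding Ieq beq aeq by simp
      also have "\<dots> = log 2 (pxmt * pt / (pxt * pmt) * (qxtm / pxmt) / (qxt / pxt))"
        using ppos qxtm_pos qxt_pos by (simp add: log_mult log_divide)
      also have "pxmt * pt / (pxt * pmt) * (qxtm / pxmt) / (qxt / pxt) = r w"
      proof -
        have qq: "qxtm = qxt * qtm / qt" using key qt_pos by (simp add: field_simps)
        show ?thesis unfolding r_def c2eq ceq qq using ppos qxt_pos qt_pos qtm_pos by (simp add: field_simps)
      qed
      finally have "Ifun (?Y3' w) - - log 2 (b (?Y3 w)) + - log 2 (a (?Y2 w)) = log 2 (r w)" .
      moreover have "r w > 0" unfolding r_def c2eq ceq using ppos qtm_pos qt_pos by simp
      then have "log 2 (r w) \<le> (r w - 1) / ln 2" by (rule log2_le)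
      ultimately show ?thesis by simp
    qed
    have int1: "integrable (measure_pmf M) (\<lambda>w. Ifun (?Y3' w))" by (rule integrable_fin[OF finS3'])
    have int2: "integrable (measure_pmf M) (\<lambda>w. - log 2 (b (?Y3 w)))" by (rule integrable_fin[OF finS3[unfolded S3_def]])
    have int3: "integrable (measure_pmf M) (\<lambda>w. - log 2 (a (?Y2 w)))" by (rule integrable_fin[OF finS2[unfolded S2_def]])
    have int4: "integrable (measure_pmf M) r" unfolding r_def
      using integrable_fin[OF finYT, where g="\<lambda>(t,m). c2 (t,m) * (1 / c t)"] by simp
    have int5: "integrable (measure_pmf M) (\<lambda>w. - log 2 (b (?Y3 w)) - - log 2 (a (?Y2 w)) + (r w - 1) / ln 2)"
      using integrable_fin[OF finS3[unfolded S3_def], where g="\<lambda>(x,t,m). - log 2 (b (x,t,m)) - - log 2 (a (x,t)) + (c2 (t,m) * (1 / c t) - 1) / ln 2"]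
      by (simp add: r_def)
    have "cond_mi M X Tk T \<le> (\<integral>w. - log 2 (b (?Y3 w)) - - log 2 (a (?Y2 w)) + (r w - 1) / ln 2 \<partial>measure_pmf M)"
      unfolding cmi
      by (rule integral_mono_AE[OF int1 int5]) (rule AE_pmfI, rule point)
    also have "\<dots> = R3 - R2"
      using int2 int3 int4 rint by (simp add: R3i R2i)
    finally show ?thesis using susp2 susp3 by simp
  qed
qed

end
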